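(* Let $C$ be a free $E$-linear code of length $2n$ and rank $k$ whose symplectic hull-rank is $l$. Let $G$ be a $k\times 2n$ binary generator matrix of $C_{Res}$ with rows $r_i=(c_{i,1},\dots,c_{i,n}\,|\,d_{i,1},\dots,d_{i,n})$, $1\le i\le k$, and let $x=(a|b)=(a_1,\dots,a_n\,|\,b_1,\dots,b_n)\in\mathbb{F}_2^{2n}$ satisfy $\langle x,r_i\rangle_s=0$ for all $1\le i\le k$. (a) The $(k+1)\times(2n+2)$ matrix $G'$ over $E$ whose first row is $(\kappa,\kappa a_1,\dots,\kappa a_n,\kappa,\kappa b_1,\dots,\kappa b_n)$ and whose $(i+1)$-th row, $1\le i\le k$, is $(0,\kappa c_{i,1},\dots,\kappa c_{i,n},0,\kappa d_{i,1},\dots,\kappa d_{i,n})$ generates a free $E$-linear code $D$ of length $2n+2$ and rank $k+1$ with symplectic hull-rank $l+1$. (b) Let $m=2n-k$ and let $H$ be an $m\times 2n$ binary parity-check matrix of $C_{Res}$ (i.e. a generator matrix of $(C_{Res})^{\perp_S}$) with rows $s_j=(s_{j,1},\dots,s_{j,n}\,|\,t_{j,1},\dots,t_{j,n})$. Let $y=(u|v)=(u_1,\dots,u_n\,|\,v_1,\dots,v_n)\in (C_{Res})^{\perp_S}$, $\delta=\langle x,y\rangle_s\in\mathbb{F}_2$, and $z_j=\langle x,s_j\rangle_s\in\mathbb{F}_2$ for $1\le j\le m$. Then the $(m+1)\times(2n+2)$ matrix $H'$ over $E$ whose first row is $(\kappa,\kappa u_1,\dots,\kappa u_n,\kappa(1+\delta),\kappa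 v_1,\dots,\kappa v_n)$ and whose $(j+1)$-th row, $1\le j\le m$, is $(0,\kappa s_{j,1},\dots,\kappa s_{j,n},\kappa z_j,\kappa t_{j,1},\dots,\kappa t_{j,n})$ is a parity-check matrix of $D$, i.e. a generator matrix of $D^{\perp_S}$.
   Context: $E=\langle \kappa,\tau \mid 2\kappa=2\tau=0,\ \kappa^2=\kappa,\ \tau^2=\tau,\ \kappa\tau=\kappa,\ \tau\kappa=\tau\rangle$ is the non-unital ring $\{0,\kappa,\tau,\zeta\}$, $\zeta=\kappa+\tau$, with $e\kappa=e\tau=e$, $e\zeta=0$ for all $e\in E$. Every $e\in E$ is uniquely $u\kappa+v\zeta$ ($u,v\in\mathbb{F}_2$); $\pi(u\kappa+v\zeta)=u$, componentwise. For $c\in\mathbb{F}_2$, $\kappa c$ means $\kappa$ if $c=1$ and $0$ if $c=0$. An $E$-linear code of length $N$ is a left $E$-submodule $C\subseteq E^{N}$; $C_{Res}=\pi(C)$, $C_{Tor}=\{v\in\mathbb{F}_2^{N}:\zeta v\in C\}$ (componentwise); $C$ is free if $C_{Res}=C_{Tor}$. For $X=\{x_1,\dots,x_k\}\subseteq E^{N}$, $\langle X\rangle_E=\{\sum e_jx_j:e_j\in E\}$, $\langle X\rangle_{\mathbb{F}_2}=\{\sum u_jx_j:u_j\in\mathbb{F}_2\}$; $X$ generates $C$ if $C=\langle X\rangle_E\cup\langle X\rangle_{\mathbb{F}_2}$; a matrix whose rows form a generating set is a generator matrix. The rank of a free code is the cardinality of a minimal generating set. Symplectic inner product on $E^{2n}$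 or $\mathbb{F}_2^{2n}$: for $x=(u|v),y=(u'|v')$ with halves of length $n$, $\langle x,y\rangle_s=\sum_i u_iv'_i+\sum_iv_iu'_i$. For binary $B$, $B^{\perp_S}=\{z:\langle z,w\rangle_s=0\ \forall w\in B\}$. For $E$-linear $C$: $C^{\perp_S}=\{z\in E^{2n}:\langle z,w\rangle_s=\langle w,z\rangle_s=0\ \forall w\in C\}$ and $SHull(C)=C\cap C^{\perp_S}$; for free $C$, $SHull(C)$ is free and the symplectic hull-rank of $C$ is $\mathrm{rank}(SHull(C))$. A parity-check matrix of $C$ is a generator matrix of $C^{\perp_S}$. *)

theory Defs
  imports Main "HOL-Library.Z2" "HOL-Library.Function_Algebras"
begin

datatype E = E0 | Kap | Tau | Zet

instantiation E :: comm_monoid_add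
begin
definition zero_E :: E where "zero_E = E0"
fun plus_E :: "E \<Rightarrow> E \<Rightarrow> E" where
  "plus_E E0 y = y"
| "plus_E x E0 = x"
| "plus_E Kap Kap = E0" | "plus_E Kap Tau = Zet" | "plus_E Kap Zet = Tau"
| "plus_E Tau Kap = Zet" | "plus_E Tau Tau = E0" | "plus_E Tau Zet = Kap"
| "plus_E Zet Kap = Tau" | "plus_E Zet Tau = Kap" | "plus_E Zet Zet = E0"
instance
proof
  fix a b c :: E
  show "a + b + c = a + (b + c)" by (cases a; cases b; cases c) simp_all
  show "a + b = b + a" by (cases a; cases b) simp_all
  show "0 + a = a" by (simp add: zero_E_def)
qed
end

instantiation E :: times
begin
fun times_E :: "E \<Rightarrow> E \<Rightarrow> E" where
  "times_E x Kap = x"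
| "times_E x Tau = x"
| "times_E x Zet = E0"
| "times_E x E0 = E0"
instance ..
end

text \<open>Residue map pi(u kappa + v zeta) = u.\<close>
fun piE :: "E \<Rightarrow> bit" where
  "piE E0 = 0" | "piE Kap = 1" | "piE Tau = 1" | "piE Zet = 0"

definition emb :: "E \<Rightarrow> bit \<Rightarrow> E" where
  "emb e c = (if c = 1 then e else 0)"

definition Evecs :: "nat \<Rightarrow> (nat \<Rightarrow> E) set" where
  "Evecs N = {v. \<forall>i\<ge>N. v i = 0}"

definition Bvecs :: "nat \<Rightarrow> (nat \<Rightarrow> bit) set" where
  "Bvecs N = {v. \<forall>i\<ge>N. v i = 0}"

definition Esmult :: "E \<Rightarrow> (nat \<Rightarrow> E) \<Rightarrow> (nat \<Rightarrow> E)" where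
  "Esmult e v = (\<lambda>i. e * v i)"

definition Bsmult_E :: "bit \<Rightarrow> (nat \<Rightarrow> E) \<Rightarrow> (nat \<Rightarrow> E)" where
  "Bsmult_E u v = (\<lambda>i. if u = 1 then v i else 0)"

definition embv :: "E \<Rightarrow> (nat \<Rightarrow> bit) \<Rightarrow> (nat \<Rightarrow> E)" where
  "embv e v = (\<lambda>i. emb e (v i))"

definition piv :: "(nat \<Rightarrow> E) \<Rightarrow> (nat \<Rightarrow> bit)" where
  "piv v = (\<lambda>i. piE (v i))"

definition E_linear_code :: "nat \<Rightarrow> (nat \<Rightarrow> E) set \<Rightarrow> bool" where
  "E_linear_code N C \<longleftrightarrow> C \<subseteq> Evecs N \<and> 0 \<in> C \<and>
     (\<forall>x\<in>C. \<forall>y\<in>C. x + y \<in> C) \<and> (\<forall>e. \<forall>x\<in>C. Esmult e x \<in> C)"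

definition C_Res :: "(nat \<Rightarrow> E) set \<Rightarrow> (nat \<Rightarrow> bit) set" where
  "C_Res C = piv ` C"

definition C_Tor :: "nat \<Rightarrow> (nat \<Rightarrow> E) set \<Rightarrow> (nat \<Rightarrow> bit) set" where
  "C_Tor N C = {v \<in> Bvecs N. embv Zet v \<in> C}"

definition free_code :: "nat \<Rightarrow> (nat \<Rightarrow> E) set \<Rightarrow> bool" where
  "free_code N C \<longleftrightarrow> C_Res C = C_Tor N C"

definition spanE :: "(nat \<Rightarrow> E) set \<Rightarrow> (nat \<Rightarrow> E) set" where
  "spanE X = {(\<Sum>x\<in>X. Esmult (c x) x) | c. True}"

definition spanF2_E :: "(nat \<Rightarrow> E) set \<Rightarrow> (nat \<Rightarrow> E) set" where
  "spanF2_E X = {(\<Sum>x\<in>X. Bsmult_E (c x) x) | c. True}"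

definition gen_code :: "(nat \<Rightarrow> E) set \<Rightarrow> (nat \<Rightarrow> E) set" where
  "gen_code X = spanE X \<union> spanF2_E X"

definition generates :: "(nat \<Rightarrow> E) set \<Rightarrow> (nat \<Rightarrow> E) set \<Rightarrow> bool" where
  "generates X C \<longleftrightarrow> finite X \<and> C = gen_code X"

definition E_gen_matrix :: "nat \<Rightarrow> (nat \<Rightarrow> nat \<Rightarrow> E) \<Rightarrow> (nat \<Rightarrow> E) set \<Rightarrow> bool" where
  "E_gen_matrix k M C \<longleftrightarrow> generates (M ` {..<k}) C"

definition rank_code :: "nat \<Rightarrow> (nat \<Rightarrow> E) set \<Rightarrow> nat" where
  "rank_code N C = (LEAST r. \<exists>X. X \<subseteq> Evecs N \<and> generates X C \<and> card X = r)"

definition sipE :: "nat \<Rightarrow> (nat \<Rightarrow> E) \<Rightarrow> (nat \<Rightarrow> E) \<Rightarrow> E" where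
  "sipE n x y = (\<Sum>i<n. x i * y (n + i)) + (\<Sum>i<n. x (n + i) * y i)"

definition sipB :: "nat \<Rightarrow> (nat \<Rightarrow> bit) \<Rightarrow> (nat \<Rightarrow> bit) \<Rightarrow> bit" where
  "sipB n x y = (\<Sum>i<n. x i * y (n + i)) + (\<Sum>i<n. x (n + i) * y i)"

definition sdualE :: "nat \<Rightarrow> (nat \<Rightarrow> E) set \<Rightarrow> (nat \<Rightarrow> E) set" where
  "sdualE n C = {z \<in> Evecs (2*n). \<forall>w\<in>C. sipE n z w = 0 \<and> sipE n w z = 0}"

definition sdualB :: "nat \<Rightarrow> (nat \<Rightarrow> bit) set \<Rightarrow> (nat \<Rightarrow> bit) set" where
  "sdualB n B = {z \<in> Bvecs (2*n). \<forall>w\<in>B. sipB n z w = 0}"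

definition SHull :: "nat \<Rightarrow> (nat \<Rightarrow> E) set \<Rightarrow> (nat \<Rightarrow> E) set" where
  "SHull n C = C \<inter> sdualE n C"

definition hull_rank :: "nat \<Rightarrow> (nat \<Rightarrow> E) set \<Rightarrow> nat" where
  "hull_rank n C = rank_code (2*n) (SHull n C)"

definition spanB :: "(nat \<Rightarrow> bit) set \<Rightarrow> (nat \<Rightarrow> bit) set" where
  "spanB X = {(\<Sum>x\<in>X. (\<lambda>i. c x * x i)) | c. True}"

definition B_gen_matrix :: "nat \<Rightarrow> nat \<Rightarrow> (nat \<Rightarrow> nat \<Rightarrow> bit) \<Rightarrow> (nat \<Rightarrow> bit) set \<Rightarrow> bool" where
  "B_gen_matrix N k M B \<longleftrightarrow> (\<forall>i<k. M i \<in> Bvecs N) \<and> B = spanB (M ` {..<k})"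

text \<open>ext n c0 v c1 = (c0, v_1..v_n, c1, v_{n+1}..v_{2n}) (0-based indices).\<close>
definition ext :: "nat \<Rightarrow> E \<Rightarrow> (nat \<Rightarrow> E) \<Rightarrow> E \<Rightarrow> (nat \<Rightarrow> E)" where
  "ext n c0 v c1 = (\<lambda>j. if j = 0 then c0 else if j \<le> n then v (j - 1)
       else if j = n + 1 then c1 else if j \<le> 2*n + 1 then v (j - 2) else 0)"

end

theory Submission
  imports Defs "HOL-Library.FuncSet"
begin


declare add_bit_eq_xor [simp del] mult_bit_eq_and [simp del]

section \<open>Scalars\<close>

fun zp :: "E \<Rightarrow> bit" where
  "zp E0 = 0" | "zp Kap = 0" | "zp Tau = 1" | "zp Zet = 1"

definition ez :: "bit \<Rightarrow> bit \<Rightarrow> E" where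
  "ez a b = emb Kap a + emb Zet b"

lemma bit_cases2: "(b::bit) = 0 \<or> b = 1" by (cases b) auto

lemma bit_UNIV: "(UNIV::bit set) = {0,1}"
  using bit_cases2 by auto

lemma E_UNIV: "(UNIV::E set) = {E0, Kap, Tau, Zet}"
  by (auto intro: E.exhaust)

lemma E_add_self [simp]: "(e::E) + e = 0"
  by (cases e) (simp_all add: zero_E_def)

lemma bit_add_self [simp]: "(b::bit) + b = 0"
  by (cases b) simp_all

lemma ez_add: "ez a b + ez c d = ez (a + c) (b + d)"
  by (cases a; cases b; cases c; cases d) (simp_all add: ez_def emb_def zero_E_def)

lemma ez_00 [simp]: "ez 0 0 = 0"
  by (simp add: ez_def emb_def)

lemma ez_eq0 [simp]: "ez a b = 0 \<longleftrightarrow> a = 0 \<and> b = 0"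
  by (cases a; cases b) (simp_all add: ez_def emb_def zero_E_def)

lemma ez_inj [simp]: "ez a b = ez c d \<longleftrightarrow> a = c \<and> b = d"
  by (cases a; cases b; cases c; cases d) (simp_all add: ez_def emb_def zero_E_def)

lemma piE_ez [simp]: "piE (ez a b) = a"
  by (cases a; cases b) (simp_all add: ez_def emb_def zero_E_def)

lemma zp_ez [simp]: "zp (ez a b) = b"
  by (cases a; cases b) (simp_all add: ez_def emb_def zero_E_def)

lemma ez_piE_zp: "ez (piE e) (zp e) = e"
  by (cases e) (simp_all add: ez_def emb_def zero_E_def)

lemma ez_mult: "ez p q * ez a b = ez (p * a) (q * a)"
  by (cases a; cases b; cases p; cases q) (simp_all add: ez_def emb_def zero_E_def)

lemma E_mult_ez: "e * ez a b = ez (piE e * a) (zp e * a)"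
  by (cases e; cases a; cases b) (simp_all add: ez_def emb_def zero_E_def)

lemma emb_Kap: "emb Kap a = ez a 0"
  by (simp add: ez_def emb_def)
lemma emb_Zet: "emb Zet a = ez 0 a"
  by (simp add: ez_def emb_def)

lemma piE_add: "piE (a + b) = piE a + piE b"
  by (cases a; cases b) (simp_all add: zero_E_def)

lemma piE_0 [simp]: "piE 0 = 0" by (simp add: zero_E_def)
lemma zp_0 [simp]: "zp 0 = 0" by (simp add: zero_E_def)

lemma ez_sum: "(\<Sum>x\<in>X. ez (f x) (g x)) = ez (\<Sum>x\<in>X. f x) (\<Sum>x\<in>X. g x)"
  by (induction X rule: infinite_finite_induct) (simp_all add: ez_add)

lemma sum_fun_app: "(sum f X) i = (\<Sum>x\<in>X. f x i)"
  by (induction X rule: infinite_finite_induct) auto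

section \<open>Vectors\<close>

definition kz :: "(nat \<Rightarrow> bit) \<Rightarrow> (nat \<Rightarrow> bit) \<Rightarrow> (nat \<Rightarrow> E)" where
  "kz a b = (\<lambda>i. ez (a i) (b i))"

definition zpv :: "(nat \<Rightarrow> E) \<Rightarrow> (nat \<Rightarrow> bit)" where
  "zpv w = (\<lambda>i. zp (w i))"

definition kcode :: "(nat \<Rightarrow> bit) set \<Rightarrow> (nat \<Rightarrow> E) set" where
  "kcode A = {kz a b | a b. a \<in> A \<and> b \<in> A}"

definition subsp :: "(nat \<Rightarrow> bit) set \<Rightarrow> bool" where
  "subsp A \<longleftrightarrow> 0 \<in> A \<and> (\<forall>a\<in>A. \<forall>b\<in>A. a + b \<in> A)"

lemma kz_add: "kz a b + kz c d = kz (a + c) (b + d)"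
  by (simp add: kz_def fun_eq_iff ez_add)

lemma kz_inj [simp]: "kz a b = kz c d \<longleftrightarrow> a = c \<and> b = d"
  by (auto simp: kz_def fun_eq_iff)

lemma kz_00 [simp]: "kz 0 0 = 0"
  by (simp add: kz_def fun_eq_iff)

lemma kz_dec: "kz (piv w) (zpv w) = w"
  by (simp add: kz_def piv_def zpv_def ez_piE_zp)

lemma piv_kz [simp]: "piv (kz a b) = a"
  by (simp add: kz_def piv_def)
lemma zpv_kz [simp]: "zpv (kz a b) = b"
  by (simp add: kz_def zpv_def)

lemma embv_Kap: "embv Kap v = kz v 0"
  by (simp add: embv_def kz_def emb_Kap)
lemma embv_Zet: "embv Zet v = kz 0 v"
  by (simp add: embv_def kz_def emb_Zet)

lemma Esmult_kz: "Esmult e (kz a b) = kz (\<lambda>i. piE e * a i) (\<lambda>i. zp e * a i)"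
  by (simp add: Esmult_def kz_def E_mult_ez)

lemma Bsmult_kz: "Bsmult_E u (kz a 0) = kz (\<lambda>i. u * a i) 0"
  by (cases u) (simp_all add: Bsmult_E_def kz_def fun_eq_iff)

lemma kz_sum: "(\<Sum>x\<in>X. kz (f x) (g x)) = kz (\<Sum>x\<in>X. f x) (\<Sum>x\<in>X. g x)"
  by (simp add: kz_def fun_eq_iff sum_fun_app ez_sum)

lemma kz_Evecs: "kz a b \<in> Evecs N \<longleftrightarrow> a \<in> Bvecs N \<and> b \<in> Bvecs N"
  by (auto simp: kz_def Evecs_def Bvecs_def)

lemma piv_add: "piv (a + b) = piv a + piv b"
  by (simp add: piv_def fun_eq_iff piE_add)

lemma sipE_kz: "sipE n (kz p q) (kz a b) = ez (sipB n p a) (sipB n q a)"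
  by (simp add: sipE_def sipB_def kz_def ez_mult ez_sum ez_add)

lemma sipB_sym: "sipB n x y = sipB n y x"
proof -
  have 1: "(\<Sum>i<n. x i * y (n + i)) = (\<Sum>i<n. y (n + i) * x i)"
    by (rule sum.cong) (simp_all only: mult.commute)
  have 2: "(\<Sum>i<n. x (n + i) * y i) = (\<Sum>i<n. y i * x (n + i))"
    by (rule sum.cong) (simp_all only: mult.commute)
  show ?thesis unfolding sipB_def 1 2 by (simp only: add.commute)
qed

lemma sipB_self: "sipB n x x = 0"
proof -
  have 1: "(\<Sum>i<n. x (n + i) * x i) = (\<Sum>i<n. x i * x (n + i))"
    by (rule sum.cong) (simp_all only: mult.commute)
  show ?thesis unfolding sipB_def 1 by (rule bit_add_self)
qed

lemma sipB_lin2: "sipB n w (\<lambda>i. a * u i + v i) = a * sipB n w u + sipB n w v"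
proof -
  have 1: "(\<Sum>i<n. w i * (a * u (n + i) + v (n + i))) = a * (\<Sum>i<n. w i * u (n + i)) + (\<Sum>i<n. w i * v (n + i))"
    by (simp only: sum_distrib_left sum.distrib[symmetric] algebra_simps)
  have 2: "(\<Sum>i<n. w (n + i) * (a * u i + v i)) = a * (\<Sum>i<n. w (n + i) * u i) + (\<Sum>i<n. w (n + i) * v i)"
    by (simp only: sum_distrib_left sum.distrib[symmetric] algebra_simps)
  show ?thesis unfolding sipB_def 1 2 by (simp only: algebra_simps)
qed

lemma sipB_lin1: "sipB n (\<lambda>i. a * u i + v i) w = a * sipB n u w + sipB n v w"
  using sipB_lin2[of n w a u v] by (simp only: sipB_sym)

lemma sipB_add2: "sipB n w (u + v) = sipB n w u + sipB n w v"
  using sipB_lin2[of n w 1 u v] by (simp only: plus_fun_def mult_1)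

lemma sipB_02 [simp]: "sipB n w 0 = 0"
  by (simp only: sipB_def zero_fun_apply mult_zero_right sum.neutral_const add_0)

lemma finite_Bvecs: "finite (Bvecs N)"
proof -
  have "Bvecs N \<subseteq> (\<lambda>S i. if i \<in> S then 1 else 0) ` Pow {..<N}"
  proof
    fix v assume v: "v \<in> Bvecs N"
    have "v = (\<lambda>i. if i \<in> {i. v i = 1} then 1 else 0)"
      by (auto simp: fun_eq_iff)
    moreover have "{i. v i = 1} \<subseteq> {..<N}" using v
      by (auto simp: Bvecs_def) (metis not_less zero_neq_one)
    ultimately show "v \<in> (\<lambda>S i. if i \<in> S then 1 else 0) ` Pow {..<N}" by blast
  qed
  then show ?thesis by (rule finite_subset) auto
qed

lemma subsp_Bvecs: "subsp (Bvecs N)"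
  by (auto simp: subsp_def Bvecs_def)


section \<open>Spans\<close>

lemma spanB_empty [simp]: "spanB {} = {0}"
  by (simp add: spanB_def)

lemma vec_add_self [simp]: "(v::nat \<Rightarrow> bit) + v = 0"
  by (simp add: fun_eq_iff)

lemma spanB_insert0:
  assumes "finite S" "s \<notin> S"
  shows "spanB (insert s S) = spanB S \<union> (\<lambda>v. s + v) ` spanB S"
proof
  show "spanB (insert s S) \<subseteq> spanB S \<union> (\<lambda>v. s + v) ` spanB S"
  proof
    fix w assume "w \<in> spanB (insert s S)"
    then obtain c where w: "w = (\<Sum>x\<in>insert s S. (\<lambda>i. c x * x i))" by (auto simp: spanB_def)
    have w2: "w = (\<lambda>i. c s * s i) + (\<Sum>x\<in>S. (\<lambda>i. c x * x i))"
      using w assms by (simp add: sum.insert)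
    have m: "(\<Sum>x\<in>S. (\<lambda>i. c x * x i)) \<in> spanB S" by (auto simp: spanB_def)
    show "w \<in> spanB S \<union> (\<lambda>v. s + v) ` spanB S"
    proof (cases "c s = 0")
      case True
      then have "w = (\<Sum>x\<in>S. (\<lambda>i. c x * x i))" using w2 by (simp add: fun_eq_iff)
      then show ?thesis using m by simp
    next
      case False
      then have "c s = 1" by simp
      then have "w = s + (\<Sum>x\<in>S. (\<lambda>i. c x * x i))" using w2 by (simp add: fun_eq_iff)
      then show ?thesis using m by blast
    qed
  qed
next
  show "spanB S \<union> (\<lambda>v. s + v) ` spanB S \<subseteq> spanB (insert s S)"
  proof
    fix w assume "w \<in> spanB S \<union> (\<lambda>v. s + v) ` spanB S"
    then obtain c :: "(nat \<Rightarrow> bit) \<Rightarrow> bit" and a :: bit where w: "w = (\<lambda>i. a * s i) + (\<Sum>x\<in>S. (\<lambda>i. c x * x i))"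
    proof
      assume "w \<in> spanB S"
      then obtain c where "w = (\<Sum>x\<in>S. (\<lambda>i. c x * x i))" by (auto simp: spanB_def)
      then show ?thesis using that[of 0 c] by (simp add: fun_eq_iff)
    next
      assume "w \<in> (\<lambda>v. s + v) ` spanB S"
      then obtain c where "w = s + (\<Sum>x\<in>S. (\<lambda>i. c x * x i))" by (auto simp: spanB_def)
      then show ?thesis using that[of 1 c] by (simp add: fun_eq_iff)
    qed
    define c' where "c' = c(s := a)"
    have "(\<Sum>x\<in>S. (\<lambda>i. c' x * x i)) = (\<Sum>x\<in>S. (\<lambda>i. c x * x i))"
      using assms(2) by (intro sum.cong) (auto simp: c'_def)
    then have "w = (\<Sum>x\<in>insert s S. (\<lambda>i. c' x * x i))"
      using w assms by (simp add: sum.insert c'_def)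
    then show "w \<in> spanB (insert s S)" by (auto simp: spanB_def)
  qed
qed

lemma spanB_facts:
  assumes "finite S"
  shows "subsp (spanB S) \<and> S \<subseteq> spanB S \<and> (\<forall>A. subsp A \<and> S \<subseteq> A \<longrightarrow> spanB S \<subseteq> A)"
  using assms
proof (induction S rule: finite_induct)
  case empty
  then show ?case by (simp add: subsp_def)
next
  case (insert s S)
  let ?P = "spanB S"
  have eq: "spanB (insert s S) = ?P \<union> (\<lambda>v. s + v) ` ?P"
    using insert by (simp add: spanB_insert0)
  have sP: "subsp ?P" using insert by blast
  have 1: "subsp (spanB (insert s S))"
    unfolding eq subsp_def
  proof (intro conjI ballI)
    show "0 \<in> ?P \<union> (\<lambda>v. s + v) ` ?P" using sP by (simp add: subsp_def)
  next
    fix a b assume a: "a \<in> ?P \<union> (\<lambda>v. s + v) ` ?P" and b: "b \<in> ?P \<union> (\<lambda>v. s + v) ` ?P"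
    show "a + b \<in> ?P \<union> (\<lambda>v. s + v) ` ?P"
    proof -
      { fix p q assume "p \<in> ?P" "q \<in> ?P"
        then have pq: "p + q \<in> ?P" using sP by (simp add: subsp_def)
        have "(s + p) + (s + q) = p + q" by (simp add: fun_eq_iff algebra_simps)
        moreover have "(s + p) + q = s + (p + q)" "p + (s + q) = s + (p + q)"
          by (simp_all add: algebra_simps)
        ultimately have "p + q \<in> ?P" "(s + p) + (s + q) \<in> ?P"
          "(s + p) + q \<in> (\<lambda>v. s + v) ` ?P" "p + (s + q) \<in> (\<lambda>v. s + v) ` ?P"
          using pq by auto }
      then show ?thesis using a b by blast
    qed
  qed
  have 2: "insert s S \<subseteq> spanB (insert s S)"
  proof -
    have "s = s + 0" by simp
    then have "s \<in> (\<lambda>v. s + v) ` ?P" using sP unfolding subsp_def by blast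
    then show ?thesis using insert eq by blast
  qed
  have 3: "spanB (insert s S) \<subseteq> A" if A: "subsp A" "insert s S \<subseteq> A" for A
  proof -
    have "?P \<subseteq> A" using insert A by blast
    moreover have "(\<lambda>v. s + v) ` ?P \<subseteq> A" using \<open>?P \<subseteq> A\<close> A by (auto simp: subsp_def)
    ultimately show ?thesis using eq by blast
  qed
  show ?case using 1 2 3 by blast
qed

lemma spanB_subsp: "finite S \<Longrightarrow> subsp (spanB S)"
  using spanB_facts by blast
lemma spanB_sub: "finite S \<Longrightarrow> S \<subseteq> spanB S"
  using spanB_facts by blast
lemma spanB_least: "finite S \<Longrightarrow> subsp A \<Longrightarrow> S \<subseteq> A \<Longrightarrow> spanB S \<subseteq> A"
  using spanB_facts by blast

lemma subsp_0: "subsp A \<Longrightarrow> 0 \<in> A" by (simp add: subsp_def)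
lemma subsp_add: "subsp A \<Longrightarrow> a \<in> A \<Longrightarrow> b \<in> A \<Longrightarrow> a + b \<in> A" by (simp add: subsp_def)

lemma spanB_self: "finite A \<Longrightarrow> subsp A \<Longrightarrow> spanB A = A"
  using spanB_least spanB_sub by blast

lemma spanB_Bvecs: "finite S \<Longrightarrow> S \<subseteq> Bvecs N \<Longrightarrow> spanB S \<subseteq> Bvecs N"
  using spanB_least subsp_Bvecs by blast

lemma spanB_insert:
  assumes "finite S"
  shows "spanB (insert s S) = spanB S \<union> (\<lambda>v. s + v) ` spanB S"
proof (cases "s \<in> S")
  case False then show ?thesis using assms spanB_insert0 by blast
next
  case True
  then have "s \<in> spanB S" using spanB_sub assms by blast
  then have "(\<lambda>v. s + v) ` spanB S \<subseteq> spanB S" using spanB_subsp[OF assms] by (auto simp: subsp_def)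
  moreover have "insert s S = S" using True by blast
  ultimately show ?thesis by auto
qed

lemma basis_exists:
  assumes "finite S"
  shows "\<exists>B\<subseteq>S. spanB B = spanB S \<and> card (spanB B) = 2 ^ card B"
  using assms
proof (induction S rule: finite_induct)
  case empty then show ?case by simp
next
  case (insert s S)
  then obtain B where B: "B \<subseteq> S" "spanB B = spanB S" "card (spanB B) = 2 ^ card B" by blast
  have fB: "finite B" using B(1) insert(1) finite_subset by blast
  show ?case
  proof (cases "s \<in> spanB S")
    case True
    then have "(\<lambda>v. s + v) ` spanB S \<subseteq> spanB S" using spanB_subsp[OF insert(1)] by (auto simp: subsp_def)
    then have "spanB (insert s S) = spanB S" using spanB_insert[OF insert(1)] by blast
    then show ?thesis using B by blast
  next
    case False
    have sB: "s \<notin> B" using B(1) insert(2) by blast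
    have eq: "spanB (insert s B) = spanB B \<union> (\<lambda>v. s + v) ` spanB B"
      using spanB_insert[OF fB] by blast
    have eq2: "spanB (insert s B) = spanB (insert s S)"
      using eq spanB_insert[OF insert(1)] B(2) by simp
    have disj: "spanB B \<inter> (\<lambda>v. s + v) ` spanB B = {}"
    proof (rule ccontr)
      assume "spanB B \<inter> (\<lambda>v. s + v) ` spanB B \<noteq> {}"
      then obtain p q where p: "p \<in> spanB B" "q \<in> spanB B" "p = s + q" by blast
      then have "p + q = s + (q + q)" by (simp only: add.assoc)
      then have "p + q = s" by simp
      moreover have "p + q \<in> spanB B" using p spanB_subsp[OF fB] subsp_add by blast
      ultimately have "s \<in> spanB B" by simp
      then show False using False B(2) by simp
    qed
    have fin: "finite (spanB B)"
    proof -
      have "spanB B = (\<lambda>c. \<Sum>x\<in>B. (\<lambda>i. c x * x i)) ` (B \<rightarrow>\<^sub>E UNIV)"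
      proof
        show "spanB B \<subseteq> (\<lambda>c. \<Sum>x\<in>B. (\<lambda>i. c x * x i)) ` (B \<rightarrow>\<^sub>E UNIV)"
        proof
          fix w assume "w \<in> spanB B"
          then obtain c where w: "w = (\<Sum>x\<in>B. (\<lambda>i. c x * x i))" by (auto simp: spanB_def)
          have wr: "w = (\<Sum>x\<in>B. (\<lambda>i. restrict c B x * x i))" unfolding w
            by (intro sum.cong) auto
          have r: "restrict c B \<in> B \<rightarrow>\<^sub>E UNIV" by simp
          show "w \<in> (\<lambda>c. \<Sum>x\<in>B. (\<lambda>i. c x * x i)) ` (B \<rightarrow>\<^sub>E UNIV)"
            using wr r by (rule image_eqI[where f="\<lambda>c. \<Sum>x\<in>B. (\<lambda>i. c x * x i)"])
        qed
      qed (auto simp: spanB_def)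
      moreover have "finite (B \<rightarrow>\<^sub>E (UNIV :: bit set))"
        using fB by (intro finite_PiE) (auto simp: bit_UNIV)
      ultimately show ?thesis by simp
    qed
    have "card (spanB (insert s B)) = card (spanB B) + card ((\<lambda>v. s + v) ` spanB B)"
      unfolding eq using disj fin by (intro card_Un_disjoint) auto
    also have "card ((\<lambda>v. s + v) ` spanB B) = card (spanB B)"
      by (intro card_image) (auto simp: inj_on_def)
    finally have "card (spanB (insert s B)) = 2 ^ card (insert s B)"
      using B(3) sB fB by simp
    then show ?thesis using eq2 B(1) by blast
  qed
qed


section \<open>E-codes of the form kcode\<close>

lemma spanB_memI: "(\<Sum>x\<in>S. (\<lambda>i. c x * x i)) \<in> spanB S"
  by (auto simp: spanB_def)

lemma kcode_memI: "a \<in> A \<Longrightarrow> b \<in> A \<Longrightarrow> kz a b \<in> kcode A"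
  by (auto simp: kcode_def)

lemma inj_embv_Kap: "inj_on (embv Kap) S"
  by (auto simp: inj_on_def embv_Kap)

lemma spanE_K:
  assumes S: "finite S"
  shows "spanE (embv Kap ` S) = kcode (spanB S)"
proof
  show "spanE (embv Kap ` S) \<subseteq> kcode (spanB S)"
  proof
    fix w assume "w \<in> spanE (embv Kap ` S)"
    then obtain c where w: "w = (\<Sum>x\<in>embv Kap ` S. Esmult (c x) x)" by (auto simp: spanE_def)
    have "w = (\<Sum>s\<in>S. Esmult (c (embv Kap s)) (embv Kap s))"
      unfolding w by (simp add: sum.reindex[OF inj_embv_Kap])
    also have "\<dots> = (\<Sum>s\<in>S. kz (\<lambda>i. piE (c (embv Kap s)) * s i) (\<lambda>i. zp (c (embv Kap s)) * s i))"
      by (simp add: embv_Kap Esmult_kz)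
    also have "\<dots> = kz (\<Sum>s\<in>S. (\<lambda>i. piE (c (embv Kap s)) * s i)) (\<Sum>s\<in>S. (\<lambda>i. zp (c (embv Kap s)) * s i))"
      by (rule kz_sum)
    finally show "w \<in> kcode (spanB S)" by (simp add: kcode_memI spanB_memI)
  qed
next
  show "kcode (spanB S) \<subseteq> spanE (embv Kap ` S)"
  proof
    fix w assume "w \<in> kcode (spanB S)"
    then obtain \<alpha> \<beta> where w: "w = kz (\<Sum>s\<in>S. (\<lambda>i. \<alpha> s * s i)) (\<Sum>s\<in>S. (\<lambda>i. \<beta> s * s i))"
      unfolding kcode_def spanB_def by blast
    define c where "c = (\<lambda>w. ez (\<alpha> (inv_into S (embv Kap) w)) (\<beta> (inv_into S (embv Kap) w)))"
    have "(\<Sum>x\<in>embv Kap ` S. Esmult (c x) x) = (\<Sum>s\<in>S. Esmult (c (embv Kap s)) (embv Kap s))"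
      by (simp add: sum.reindex[OF inj_embv_Kap])
    also have "\<dots> = (\<Sum>s\<in>S. kz (\<lambda>i. \<alpha> s * s i) (\<lambda>i. \<beta> s * s i))"
    proof (intro sum.cong refl)
      fix s assume s: "s \<in> S"
      have inv: "c (embv Kap s) = ez (\<alpha> s) (\<beta> s)"
        using s by (simp add: c_def inv_into_f_f[OF inj_embv_Kap])
      show "Esmult (c (embv Kap s)) (embv Kap s) = kz (\<lambda>i. \<alpha> s * s i) (\<lambda>i. \<beta> s * s i)"
        unfolding inv by (simp add: embv_Kap Esmult_kz)
    qed
    also have "\<dots> = w" unfolding w by (rule kz_sum)
    finally show "w \<in> spanE (embv Kap ` S)" unfolding spanE_def by blast
  qed
qed

lemma spanF2_K:
  assumes S: "finite S"
  shows "spanF2_E (embv Kap ` S) \<subseteq> kcode (spanB S)"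
proof
  fix w assume "w \<in> spanF2_E (embv Kap ` S)"
  then obtain c where w: "w = (\<Sum>x\<in>embv Kap ` S. Bsmult_E (c x) x)" by (auto simp: spanF2_E_def)
  have "w = (\<Sum>s\<in>S. Bsmult_E (c (embv Kap s)) (embv Kap s))"
    unfolding w by (simp add: sum.reindex[OF inj_embv_Kap])
  also have "\<dots> = (\<Sum>s\<in>S. kz (\<lambda>i. c (embv Kap s) * s i) ((\<lambda>s. 0) s))"
    by (simp add: embv_Kap Bsmult_kz)
  also have "\<dots> = kz (\<Sum>s\<in>S. (\<lambda>i. c (embv Kap s) * s i)) (\<Sum>s\<in>S. 0)"
    by (rule kz_sum)
  finally have "w = kz (\<Sum>s\<in>S. (\<lambda>i. c (embv Kap s) * s i)) 0" by simp
  moreover have "0 \<in> spanB S" using spanB_subsp[OF S] subsp_0 by blast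
  ultimately show "w \<in> kcode (spanB S)" by (simp add: kcode_memI spanB_memI)
qed

lemma gen_code_K: "finite S \<Longrightarrow> gen_code (embv Kap ` S) = kcode (spanB S)"
  unfolding gen_code_def using spanE_K spanF2_K by blast

lemma subsp_smult: "subsp A \<Longrightarrow> a \<in> A \<Longrightarrow> (\<lambda>i. (\<beta>::bit) * a i) \<in> A"
proof (cases \<beta>)
  case zero
  assume "subsp A"
  moreover have "(\<lambda>i. \<beta> * a i) = 0" using zero by (simp add: fun_eq_iff)
  ultimately show ?thesis by (simp add: subsp_def)
next
  case one
  assume "a \<in> A"
  moreover have "(\<lambda>i. \<beta> * a i) = a" using one by (simp add: fun_eq_iff)
  ultimately show ?thesis by simp
qed

lemma kcode_mem_iff: "kz a b \<in> kcode A \<longleftrightarrow> a \<in> A \<and> b \<in> A"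
  unfolding kcode_def by simp

lemma kcode_elim: "w \<in> kcode A \<Longrightarrow> (\<And>a b. w = kz a b \<Longrightarrow> a \<in> A \<Longrightarrow> b \<in> A \<Longrightarrow> P) \<Longrightarrow> P"
  unfolding kcode_def by blast

lemma kcode_lin:
  assumes A: "subsp A" "A \<subseteq> Bvecs N"
  shows "E_linear_code N (kcode A)"
  unfolding E_linear_code_def
proof (intro conjI ballI allI subsetI)
  fix w assume "w \<in> kcode A"
  then show "w \<in> Evecs N" using A(2)
    by (elim kcode_elim) (auto simp: kz_Evecs)
next
  show "0 \<in> kcode A" using kcode_memI[OF subsp_0[OF A(1)] subsp_0[OF A(1)]] by simp
next
  fix x y assume x: "x \<in> kcode A" and y: "y \<in> kcode A"
  from x obtain a b where xa: "x = kz a b" "a \<in> A" "b \<in> A" by (elim kcode_elim) blast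
  from y obtain c d where yc: "y = kz c d" "c \<in> A" "d \<in> A" by (elim kcode_elim) blast
  show "x + y \<in> kcode A" unfolding xa yc kz_add
    by (intro kcode_memI subsp_add[OF A(1)] xa yc)
next
  fix e x assume x: "x \<in> kcode A"
  from x obtain a b where xa: "x = kz a b" "a \<in> A" "b \<in> A" by (elim kcode_elim) blast
  show "Esmult e x \<in> kcode A" unfolding xa Esmult_kz
    by (intro kcode_memI subsp_smult[OF A(1)] xa)
qed

lemma kcode_res: "subsp A \<Longrightarrow> C_Res (kcode A) = A"
proof -
  assume A: "subsp A"
  show ?thesis unfolding C_Res_def
  proof
    show "piv ` kcode A \<subseteq> A"
    proof
      fix v assume "v \<in> piv ` kcode A"
      then obtain w where w: "w \<in> kcode A" "v = piv w" by blast
      from w(1) show "v \<in> A" by (elim kcode_elim) (simp add: w(2))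
    qed
  next
    show "A \<subseteq> piv ` kcode A"
    proof
      fix a assume a: "a \<in> A"
      have "kz a 0 \<in> kcode A" by (intro kcode_memI a subsp_0[OF A])
      moreover have "a = piv (kz a 0)" by simp
      ultimately show "a \<in> piv ` kcode A" by blast
    qed
  qed
qed

lemma kcode_tor: "subsp A \<Longrightarrow> A \<subseteq> Bvecs N \<Longrightarrow> C_Tor N (kcode A) = A"
  unfolding C_Tor_def embv_Zet kcode_mem_iff
  using subsp_0 by blast

lemma kcode_free: "subsp A \<Longrightarrow> A \<subseteq> Bvecs N \<Longrightarrow> free_code N (kcode A)"
  by (simp add: free_code_def kcode_res kcode_tor)

lemma kcode_img: "kcode A = (\<lambda>(a,b). kz a b) ` (A \<times> A)"
  unfolding kcode_def by auto

lemma card_kcode: "card (kcode A) = card A * card A"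
proof -
  have "inj_on (\<lambda>(a,b). kz a b) (A \<times> A)" by (rule inj_onI) auto
  then show ?thesis unfolding kcode_img by (simp add: card_image card_cartesian_product)
qed

lemma spanE_memI: "(\<Sum>x\<in>X. Esmult (c x) x) \<in> spanE X"
  unfolding spanE_def by blast

lemma spanF2_memI: "(\<Sum>x\<in>X. Bsmult_E (c x) x) \<in> spanF2_E X"
  unfolding spanF2_E_def by blast

lemma card_UNIV_E: "card (UNIV :: E set) = 4" unfolding E_UNIV by (simp add: eval_nat_numeral)
lemma card_UNIV_bit: "card (UNIV :: bit set) = 2" unfolding bit_UNIV by (simp add: eval_nat_numeral)
lemma finite_UNIV_E: "finite (UNIV :: E set)" unfolding E_UNIV by simp
lemma finite_UNIV_bit: "finite (UNIV :: bit set)" unfolding bit_UNIV by simp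

lemma spanE_img: "spanE X = (\<lambda>c. \<Sum>x\<in>X. Esmult (c x) x) ` (X \<rightarrow>\<^sub>E UNIV)"
  proof
    show "spanE X \<subseteq> (\<lambda>c. \<Sum>x\<in>X. Esmult (c x) x) ` (X \<rightarrow>\<^sub>E UNIV)"
    proof
      fix w assume "w \<in> spanE X"
      then obtain c where w: "w = (\<Sum>x\<in>X. Esmult (c x) x)" unfolding spanE_def by blast
      have wr: "w = (\<Sum>x\<in>X. Esmult (restrict c X x) x)" unfolding w
        by (intro sum.cong) auto
      have r: "restrict c X \<in> X \<rightarrow>\<^sub>E UNIV" by simp
      show "w \<in> (\<lambda>c. \<Sum>x\<in>X. Esmult (c x) x) ` (X \<rightarrow>\<^sub>E UNIV)"
        using wr r by (rule image_eqI[where f="\<lambda>c. \<Sum>x\<in>X. Esmult (c x) x"])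
    qed
  next
    show "(\<lambda>c. \<Sum>x\<in>X. Esmult (c x) x) ` (X \<rightarrow>\<^sub>E UNIV) \<subseteq> spanE X"
      by (auto intro: spanE_memI)
  qed

lemma spanF2_img: "spanF2_E X = (\<lambda>c. \<Sum>x\<in>X. Bsmult_E (c x) x) ` (X \<rightarrow>\<^sub>E UNIV)"
  proof
    show "spanF2_E X \<subseteq> (\<lambda>c. \<Sum>x\<in>X. Bsmult_E (c x) x) ` (X \<rightarrow>\<^sub>E UNIV)"
    proof
      fix w assume "w \<in> spanF2_E X"
      then obtain c where w: "w = (\<Sum>x\<in>X. Bsmult_E (c x) x)" unfolding spanF2_E_def by blast
      have wr: "w = (\<Sum>x\<in>X. Bsmult_E (restrict c X x) x)" unfolding w
        by (intro sum.cong) auto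
      have r: "restrict c X \<in> X \<rightarrow>\<^sub>E UNIV" by simp
      show "w \<in> (\<lambda>c. \<Sum>x\<in>X. Bsmult_E (c x) x) ` (X \<rightarrow>\<^sub>E UNIV)"
        using wr r by (rule image_eqI[where f="\<lambda>c. \<Sum>x\<in>X. Bsmult_E (c x) x"])
    qed
  next
    show "(\<lambda>c. \<Sum>x\<in>X. Bsmult_E (c x) x) ` (X \<rightarrow>\<^sub>E UNIV) \<subseteq> spanF2_E X"
      by (auto intro: spanF2_memI)
  qed

lemma card_spanE: "finite X \<Longrightarrow> card (spanE X) \<le> 4 ^ card X"
proof -
  assume X: "finite X"
  have fin: "finite (X \<rightarrow>\<^sub>E (UNIV :: E set))"
    using X finite_UNIV_E by (intro finite_PiE) auto
  have "card (X \<rightarrow>\<^sub>E (UNIV :: E set)) = 4 ^ card X"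
    using X card_UNIV_E by (simp add: card_PiE)
  then show ?thesis unfolding spanE_img using card_image_le[OF fin] by metis
qed

lemma card_spanF2: "finite X \<Longrightarrow> card (spanF2_E X) \<le> 2 ^ card X"
proof -
  assume X: "finite X"
  have fin: "finite (X \<rightarrow>\<^sub>E (UNIV :: bit set))"
    using X finite_UNIV_bit by (intro finite_PiE) auto
  have "card (X \<rightarrow>\<^sub>E (UNIV :: bit set)) = 2 ^ card X"
    using X card_UNIV_bit by (simp add: card_PiE)
  then show ?thesis unfolding spanF2_img using card_image_le[OF fin] by metis
qed

lemma card_gen_code: "finite X \<Longrightarrow> card (gen_code X) \<le> 4 ^ card X + 2 ^ card X"
  unfolding gen_code_def
  by (meson add_mono card_Un_le card_spanE card_spanF2 order_trans)

lemma pow_aux: "(r::nat) < d \<Longrightarrow> 4 ^ r + 2 ^ r < (4::nat) ^ d"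
proof -
  assume "r < d"
  have "(2::nat) ^ r \<le> 4 ^ r" by (simp add: power_mono)
  then have "4 ^ r + 2 ^ r \<le> 2 * (4::nat) ^ r" by simp
  also have "\<dots> < 4 * 4 ^ r" by simp
  also have "\<dots> = 4 ^ Suc r" by simp
  also have "\<dots> \<le> 4 ^ d" using \<open>r < d\<close> by (intro power_increasing) auto
  finally show ?thesis .
qed

lemma rank_kcode:
  assumes A: "subsp A" "A \<subseteq> Bvecs N"
  shows "card A = 2 ^ rank_code N (kcode A)"
proof -
  have fA: "finite A" using A(2) finite_Bvecs finite_subset by blast
  obtain B where B: "B \<subseteq> A" "spanB B = spanB A" "card (spanB B) = 2 ^ card B"
    using basis_exists[OF fA] by blast
  have sA: "spanB A = A" using spanB_self fA A(1) by blast
  have fB: "finite B" using B(1) fA finite_subset by blast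
  have cA: "card A = 2 ^ card B" using B sA by simp
  have r: "rank_code N (kcode A) = card B"
    unfolding rank_code_def
  proof (rule Least_equality)
    show "\<exists>X\<subseteq>Evecs N. generates X (kcode A) \<and> card X = card B"
    proof (intro exI conjI)
      show "embv Kap ` B \<subseteq> Evecs N" using B(1) A(2) by (auto simp: embv_Kap kz_Evecs Bvecs_def)
      show "generates (embv Kap ` B) (kcode A)"
        unfolding generates_def using fB gen_code_K[OF fB] B(2) sA by simp
      show "card (embv Kap ` B) = card B" by (rule card_image[OF inj_embv_Kap])
    qed
  next
    fix r assume "\<exists>X\<subseteq>Evecs N. generates X (kcode A) \<and> card X = r"
    then obtain X where X: "finite X" "kcode A = gen_code X" "card X = r"
      unfolding generates_def by blast
    show "card B \<le> r"
    proof (rule ccontr)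
      assume "\<not> card B \<le> r"
      then have "4 ^ r + 2 ^ r < (4::nat) ^ card B" by (intro pow_aux) simp
      moreover have "card (kcode A) = 4 ^ card B"
        using cA by (simp add: card_kcode power_mult_distrib[symmetric])
      ultimately show False using card_gen_code[OF X(1)] X by simp
    qed
  qed
  show ?thesis using cA r by simp
qed



lemma code_kcode:
  assumes lin: "E_linear_code N C" and fr: "free_code N C"
  shows "C = kcode (C_Res C) \<and> subsp (C_Res C) \<and> C_Res C \<subseteq> Bvecs N"
proof -
  have CE: "C \<subseteq> Evecs N" and C0: "0 \<in> C" and Cadd: "\<And>x y. x \<in> C \<Longrightarrow> y \<in> C \<Longrightarrow> x + y \<in> C"
    and Csm: "\<And>e x. x \<in> C \<Longrightarrow> Esmult e x \<in> C"
    using lin unfolding E_linear_code_def by blast+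
  have tor: "C_Tor N C = C_Res C" using fr by (simp add: free_code_def)
  have s: "subsp (C_Res C)"
    unfolding subsp_def C_Res_def
  proof (intro conjI ballI)
    have "piv 0 = 0" by (simp add: piv_def fun_eq_iff)
    then show "0 \<in> piv ` C" using C0 by (metis image_eqI)
  next
    fix a b assume "a \<in> piv ` C" "b \<in> piv ` C"
    then obtain c d where "c \<in> C" "d \<in> C" "a = piv c" "b = piv d" by blast
    then show "a + b \<in> piv ` C" using Cadd by (metis image_eqI piv_add)
  qed
  have b: "C_Res C \<subseteq> Bvecs N"
  proof
    fix a assume "a \<in> C_Res C"
    then obtain c where c: "c \<in> C" "a = piv c" by (auto simp: C_Res_def)
    then have "kz (piv c) (zpv c) \<in> Evecs N" using CE kz_dec by (metis subsetD)
    then show "a \<in> Bvecs N" using c by (simp add: kz_Evecs)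
  qed
  have K: "kz (piv c) 0 \<in> C" if "c \<in> C" for c
  proof -
    have "Esmult Kap (kz (piv c) (zpv c)) = kz (piv c) 0"
      unfolding Esmult_kz by (simp add: fun_eq_iff kz_def)
    then have "Esmult Kap c = kz (piv c) 0" by (simp only: kz_dec)
    then show ?thesis using Csm[OF that] by metis
  qed
  have eq: "C = kcode (C_Res C)"
  proof
    show "C \<subseteq> kcode (C_Res C)"
    proof
      fix c assume c: "c \<in> C"
      have "c + kz (piv c) 0 = kz 0 (zpv c)"
        by (subst (1) kz_dec[symmetric, of c]) (simp add: kz_add)
      then have "embv Zet (zpv c) \<in> C" using Cadd[OF c K[OF c]] by (simp add: embv_Zet)
      moreover have "zpv c \<in> Bvecs N" using c CE kz_dec kz_Evecs by (metis subsetD)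
      ultimately have "zpv c \<in> C_Res C" using tor by (auto simp: C_Tor_def)
      moreover have "piv c \<in> C_Res C" using c by (simp add: C_Res_def)
      ultimately show "c \<in> kcode (C_Res C)" using kcode_memI kz_dec by metis
    qed
  next
    show "kcode (C_Res C) \<subseteq> C"
    proof
      fix w assume "w \<in> kcode (C_Res C)"
      then obtain a bb where w: "w = kz a bb" "a \<in> C_Res C" "bb \<in> C_Res C" by (elim kcode_elim) blast
      obtain c where c: "c \<in> C" "a = piv c" using w(2) by (auto simp: C_Res_def)
      have "kz 0 bb \<in> C" using w(3) tor by (auto simp: C_Tor_def embv_Zet)
      then have "kz a 0 + kz 0 bb \<in> C" using K[OF c(1)] c(2) Cadd by simp
      then show "w \<in> C" using w(1) by (simp add: kz_add)
    qed
  qed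
  show ?thesis using eq s b by blast
qed

lemma sipB_add1: "sipB n (u + v) w = sipB n u w + sipB n v w"
  by (metis sipB_add2 sipB_sym)

lemma sipB_01 [simp]: "sipB n 0 w = 0"
  by (metis sipB_02 sipB_sym)

lemma sdualB_subsp: "subsp (sdualB n A)"
  unfolding subsp_def sdualB_def
  by (auto simp: sipB_add1 Bvecs_def)

lemma sdualB_Bvecs: "sdualB n A \<subseteq> Bvecs (2*n)"
  by (auto simp: sdualB_def)

lemma subsp_Int: "subsp A \<Longrightarrow> subsp B \<Longrightarrow> subsp (A \<inter> B)"
  by (auto simp: subsp_def)

lemma sdualE_kcode:
  assumes A0: "0 \<in> A"
  shows "sdualE n (kcode A) = kcode (sdualB n A)"
proof
  show "sdualE n (kcode A) \<subseteq> kcode (sdualB n A)"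
  proof
    fix z assume z: "z \<in> sdualE n (kcode A)"
    let ?p = "piv z" and ?q = "zpv z"
    have zd: "z = kz ?p ?q" by (simp add: kz_dec)
    have zE: "z \<in> Evecs (2*n)" using z by (simp add: sdualE_def)
    then have pq: "?p \<in> Bvecs (2*n)" "?q \<in> Bvecs (2*n)" using zd kz_Evecs by metis+
    have o: "sipB n ?p a = 0 \<and> sipB n ?q a = 0" if a: "a \<in> A" for a
    proof -
      have "kz a 0 \<in> kcode A" using a A0 by (rule kcode_memI)
      then have "sipE n z (kz a 0) = 0" using z by (simp add: sdualE_def)
      then show ?thesis by (subst (asm) zd) (simp add: sipE_kz)
    qed
    have "?p \<in> sdualB n A" "?q \<in> sdualB n A" using pq o by (auto simp: sdualB_def)
    then show "z \<in> kcode (sdualB n A)" using zd kcode_memI by metis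
  qed
next
  show "kcode (sdualB n A) \<subseteq> sdualE n (kcode A)"
  proof
    fix z assume "z \<in> kcode (sdualB n A)"
    then obtain p q where z: "z = kz p q" "p \<in> sdualB n A" "q \<in> sdualB n A" by (elim kcode_elim) blast
    have pq: "p \<in> Bvecs (2*n)" "q \<in> Bvecs (2*n)" using z by (auto simp: sdualB_def)
    show "z \<in> sdualE n (kcode A)"
      unfolding sdualE_def
    proof (intro CollectI conjI ballI)
      show "z \<in> Evecs (2*n)" using pq z(1) by (simp add: kz_Evecs)
    next
      fix w assume "w \<in> kcode A"
      then obtain a b where w: "w = kz a b" "a \<in> A" "b \<in> A" by (elim kcode_elim) blast
      have "sipB n p a = 0" "sipB n q a = 0" "sipB n p b = 0"
        using z w by (auto simp: sdualB_def)
      then show "sipE n z w = 0" "sipE n w z = 0"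
        using z(1) w(1) by (simp_all add: sipE_kz sipB_sym[of n a p] sipB_sym[of n b p])
    qed
  qed
qed

lemma kcode_Int: "kcode A \<inter> kcode B = kcode (A \<inter> B)"
  unfolding kcode_def by auto

lemma SHull_kcode: "0 \<in> A \<Longrightarrow> SHull n (kcode A) = kcode (A \<inter> sdualB n A)"
  by (simp add: SHull_def sdualE_kcode kcode_Int)



definition extB :: "nat \<Rightarrow> bit \<Rightarrow> (nat \<Rightarrow> bit) \<Rightarrow> bit \<Rightarrow> (nat \<Rightarrow> bit)" where
  "extB n c0 v c1 = (\<lambda>j. if j = 0 then c0 else if j \<le> n then v (j - 1)
       else if j = n + 1 then c1 else if j \<le> 2*n + 1 then v (j - 2) else 0)"

lemma ext_emb: "ext n (emb Kap c0) (embv Kap v) (emb Kap c1) = embv Kap (extB n c0 v c1)"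
  by (simp add: ext_def extB_def embv_def fun_eq_iff emb_def)

lemma extB_comb: "(\<lambda>i. a * extB n c0 v c1 i) + extB n c0' v' c1' =
   extB n (a * c0 + c0') (\<lambda>i. a * v i + v' i) (a * c1 + c1')"
  by (simp add: extB_def fun_eq_iff)

lemma extB_add: "extB n c0 v c1 + extB n c0' v' c1' = extB n (c0 + c0') (v + v') (c1 + c1')"
  by (simp add: extB_def fun_eq_iff)

lemma extB_0: "extB n 0 0 0 = 0"
  by (simp add: extB_def fun_eq_iff)

lemma extB_Bvecs: "extB n c0 v c1 \<in> Bvecs (2*(n+1))"
  by (simp add: extB_def Bvecs_def)

lemma extB_at0 [simp]: "extB n c0 v c1 0 = c0"
  by (simp add: extB_def)

lemma extB_atn [simp]: "extB n c0 v c1 (Suc n) = c1"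
  by (simp add: extB_def)

lemma extB_inj:
  assumes "v \<in> Bvecs (2*n)" "v' \<in> Bvecs (2*n)" "extB n c0 v c1 = extB n c0' v' c1'"
  shows "v = v'"
proof
  fix i
  show "v i = v' i"
  proof (cases "i < n")
    case True
    then show ?thesis using fun_cong[OF assms(3), of "Suc i"] by (simp add: extB_def)
  next
    case False
    show ?thesis
    proof (cases "i < 2*n")
      case True
      then show ?thesis using False fun_cong[OF assms(3), of "i + 2"] by (simp add: extB_def)
    next
      case False
      then show ?thesis using assms(1,2) by (simp add: Bvecs_def)
    qed
  qed
qed

definition unext :: "nat \<Rightarrow> (nat \<Rightarrow> bit) \<Rightarrow> (nat \<Rightarrow> bit)" where
  "unext n w = (\<lambda>i. if i < n then w (i + 1) else if i < 2*n then w (i + 2) else 0)"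

lemma extB_surj:
  assumes "w \<in> Bvecs (2*(n+1))"
  shows "w = extB n (w 0) (unext n w) (w (Suc n)) \<and> unext n w \<in> Bvecs (2*n)"
proof
  show "unext n w \<in> Bvecs (2*n)" by (simp add: unext_def Bvecs_def)
  show "w = extB n (w 0) (unext n w) (w (Suc n))"
  proof
    fix j
    have aux: "\<not> j \<le> n \<Longrightarrow> j \<noteq> Suc n \<Longrightarrow> Suc (Suc (j - 2)) = j" by arith
    show "w j = extB n (w 0) (unext n w) (w (Suc n)) j"
      using assms aux by (cases "j = 0") (auto simp: extB_def unext_def Bvecs_def)
  qed
qed

lemma sipB_extB:
  "sipB (n+1) (extB n c0 v c1) (extB n c0' v' c1') = c0 * c1' + c1 * c0' + sipB n v v'"
proof -
  let ?u = "extB n c0 v c1" and ?w = "extB n c0' v' c1'"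
  have 1: "(\<Sum>i<Suc n. ?u i * ?w (Suc n + i)) = c0 * c1' + (\<Sum>i<n. v i * v' (n + i))"
  proof -
    have "(\<Sum>i<Suc n. ?u i * ?w (Suc n + i)) = ?u 0 * ?w (Suc n + 0) + (\<Sum>i<n. ?u (Suc i) * ?w (Suc n + Suc i))"
      by (rule sum.lessThan_Suc_shift)
    also have "(\<Sum>i<n. ?u (Suc i) * ?w (Suc n + Suc i)) = (\<Sum>i<n. v i * v' (n + i))"
      by (rule sum.cong) (auto simp: extB_def)
    finally show ?thesis by simp
  qed
  have 2: "(\<Sum>i<Suc n. ?u (Suc n + i) * ?w i) = c1 * c0' + (\<Sum>i<n. v (n + i) * v' i)"
  proof -
    have "(\<Sum>i<Suc n. ?u (Suc n + i) * ?w i) = ?u (Suc n + 0) * ?w 0 + (\<Sum>i<n. ?u (Suc n + Suc i) * ?w (Suc i))"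
      by (rule sum.lessThan_Suc_shift)
    also have "(\<Sum>i<n. ?u (Suc n + Suc i) * ?w (Suc i)) = (\<Sum>i<n. v (n + i) * v' i)"
      by (rule sum.cong) (auto simp: extB_def)
    finally show ?thesis by simp
  qed
  show ?thesis unfolding sipB_def using 1 2 by (simp add: algebra_simps)
qed

lemma memT: "r \<in> A \<Longrightarrow> (\<lambda>i. a * r0 i) + f r \<in> (\<lambda>(a,r). (\<lambda>i. a * r0 i) + f r) ` (UNIV \<times> A)"
  by (rule image_eqI[where x="(a,r)"]) auto

lemma span_ins_lin:
  assumes S: "finite S" and fadd: "\<And>a b. f (a + b) = f a + f b" and f0: "f 0 = 0"
  shows "spanB (insert r0 (f ` S)) = (\<lambda>(a,r). (\<lambda>i. a * r0 i) + f r) ` (UNIV \<times> spanB S)"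
proof
  let ?T = "(\<lambda>(a,r). (\<lambda>i. a * r0 i) + f r) ` (UNIV \<times> spanB S)"
  have fS: "finite (insert r0 (f ` S))" using S by simp
  have sS: "subsp (spanB S)" using spanB_subsp[OF S] .
  show "spanB (insert r0 (f ` S)) \<subseteq> ?T"
  proof (rule spanB_least[OF fS])
    show "subsp ?T"
      unfolding subsp_def
    proof (intro conjI ballI)
      have e: "0 = (\<lambda>i. 0 * r0 i) + f 0" using f0 by (simp add: fun_eq_iff)
      show "0 \<in> ?T" by (subst e, rule memT, rule subsp_0[OF sS])
    next
      fix x y assume "x \<in> ?T" "y \<in> ?T"
      then obtain a r b t where xy: "x = (\<lambda>i. a * r0 i) + f r" "r \<in> spanB S" "y = (\<lambda>i. b * r0 i) + f t" "t \<in> spanB S"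
        by auto
      have e: "x + y = (\<lambda>i. (a + b) * r0 i) + f (r + t)"
        unfolding xy fadd by (simp add: fun_eq_iff algebra_simps)
      have "r + t \<in> spanB S" using xy subsp_add[OF sS] by blast
      then show "x + y \<in> ?T" by (subst e, rule memT)
    qed
  next
    show "insert r0 (f ` S) \<subseteq> ?T"
    proof
      fix x assume "x \<in> insert r0 (f ` S)"
      then consider "x = r0" | s where "s \<in> S" "x = f s" by blast
      then show "x \<in> ?T"
      proof cases
        case 1
        then have e: "x = (\<lambda>i. 1 * r0 i) + f 0" using f0 by (simp add: fun_eq_iff)
        show ?thesis by (subst e, rule memT, rule subsp_0[OF sS])
      next
        case 2
        then have e: "x = (\<lambda>i. 0 * r0 i) + f s" by (simp add: fun_eq_iff)
        have "s \<in> spanB S" using 2 spanB_sub[OF S] by blast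
        then show ?thesis by (subst e, rule memT)
      qed
    qed
  qed
next
  let ?T = "(\<lambda>(a,r). (\<lambda>i. a * r0 i) + f r) ` (UNIV \<times> spanB S)"
  have fS: "finite (insert r0 (f ` S))" using S by simp
  let ?P = "spanB (insert r0 (f ` S))"
  have sP: "subsp ?P" using spanB_subsp[OF fS] .
  have r0P: "r0 \<in> ?P" using spanB_sub[OF fS] by blast
  have fP: "f r \<in> ?P" if "r \<in> spanB S" for r
  proof -
    have "spanB S \<subseteq> {r. f r \<in> ?P}"
    proof (rule spanB_least[OF S])
      show "subsp {r. f r \<in> ?P}" unfolding subsp_def using sP f0 fadd
        by (simp add: subsp_def)
      show "S \<subseteq> {r. f r \<in> ?P}" using spanB_sub[OF fS] by auto
    qed
    then show ?thesis using that by blast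
  qed
  show "?T \<subseteq> ?P"
  proof
    fix x assume "x \<in> ?T"
    then obtain a r where x: "x = (\<lambda>i. a * r0 i) + f r" "r \<in> spanB S" by auto
    have "(\<lambda>i. a * r0 i) \<in> ?P" using subsp_smult[OF sP r0P] .
    then show "x \<in> ?P" using x fP subsp_add[OF sP] by blast
  qed
qed

lemma card_lin_img:
  fixes r0 :: "nat \<Rightarrow> bit"
  assumes fA: "finite A" and r00: "r0 0 = 1" and f0: "\<And>r. r \<in> A \<Longrightarrow> f r 0 = 0"
    and finj: "inj_on f A"
  shows "card ((\<lambda>(a,r). (\<lambda>i. a * r0 i) + f r) ` (UNIV \<times> A)) = 2 * card A"
proof -
  have "inj_on (\<lambda>(a,r). (\<lambda>i. a * r0 i) + f r) (UNIV \<times> A)"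
  proof (rule inj_onI, clarify)
    fix a r b t assume r: "r \<in> A" and t: "t \<in> A" and eq: "(\<lambda>i. a * r0 i) + f r = (\<lambda>i. b * r0 i) + f t"
    have "a * r0 0 + f r 0 = b * r0 0 + f t 0" using fun_cong[OF eq, of 0] by simp
    then have "a = b" unfolding r00 f0[OF r] f0[OF t] by simp
    then have "f r = f t" using eq by (simp add: fun_eq_iff)
    then show "a = b \<and> r = t" using \<open>a = b\<close> finj r t by (simp add: inj_on_def)
  qed
  then show ?thesis using fA by (simp add: card_image card_cartesian_product card_UNIV_bit)
qed


lemma pow2_inj: "(2::nat) ^ a = 2 ^ b \<Longrightarrow> a = b" by simp

theorem mainTheorem3:
  fixes n k l :: nat
    and C :: "(nat \<Rightarrow> E) set"
    and G :: "nat \<Rightarrow> nat \<Rightarrow> bit"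
    and x :: "nat \<Rightarrow> bit"
    and H :: "nat \<Rightarrow> nat \<Rightarrow> bit"
    and y :: "nat \<Rightarrow> bit"
    and G' :: "nat \<Rightarrow> nat \<Rightarrow> E"
    and D :: "(nat \<Rightarrow> E) set"
  assumes C_lin: "E_linear_code (2*n) C"
    and C_free: "free_code (2*n) C"
    and C_rank: "rank_code (2*n) C = k"
    and C_hull: "hull_rank n C = l"
    and G_gen: "B_gen_matrix (2*n) k G (C_Res C)"
    and x_vec: "x \<in> Bvecs (2*n)"
    and x_orth: "\<forall>i<k. sipB n x (G i) = 0"
  defines "G' \<equiv> (\<lambda>i. if i = 0 then ext n Kap (embv Kap x) Kap
                     else ext n 0 (embv Kap (G (i - 1))) 0)"
    and "D \<equiv> gen_code (G' ` {..<k+1})"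
  shows "(E_linear_code (2*(n+1)) D \<and> free_code (2*(n+1)) D \<and>
          rank_code (2*(n+1)) D = k + 1 \<and> hull_rank (n+1) D = l + 1) \<and>
         (B_gen_matrix (2*n) (2*n - k) H (sdualB n (C_Res C)) \<longrightarrow>
          y \<in> sdualB n (C_Res C) \<longrightarrow>
          E_gen_matrix (2*n - k + 1)
            (\<lambda>j. if j = 0 then ext n Kap (embv Kap y) (emb Kap (1 + sipB n x y))
                 else ext n 0 (embv Kap (H (j - 1))) (emb Kap (sipB n x (H (j - 1)))))
            (sdualE (n+1) D))"
proof -
  define CR where "CR = C_Res C"
  have cc: "C = kcode CR \<and> subsp CR \<and> CR \<subseteq> Bvecs (2*n)"
    using code_kcode[OF C_lin C_free] CR_def by simp
  then have Ceq: "C = kcode CR" and sCR: "subsp CR" and bCR: "CR \<subseteq> Bvecs (2*n)" by auto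
  have fCR: "finite CR" using bCR finite_Bvecs finite_subset by blast
  have cCR: "card CR = 2 ^ k" using rank_kcode[OF sCR bCR] C_rank Ceq by simp
  define HC where "HC = CR \<inter> sdualB n CR"
  have sHC: "subsp HC" unfolding HC_def by (intro subsp_Int sCR sdualB_subsp)
  have bHC: "HC \<subseteq> Bvecs (2*n)" unfolding HC_def using bCR by blast
  have fHC: "finite HC" using bHC finite_Bvecs finite_subset by blast
  have cHC: "card HC = 2 ^ l"
  proof -
    have "SHull n C = kcode HC" unfolding HC_def Ceq by (rule SHull_kcode[OF subsp_0[OF sCR]])
    then show ?thesis using rank_kcode[OF sHC bHC] C_hull by (simp add: hull_rank_def)
  qed
  have CRs: "CR = spanB (G ` {..<k})" using G_gen by (simp add: B_gen_matrix_def CR_def)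
  have fG: "finite (G ` {..<k})" by simp
  have xperp: "sipB n x r = 0" if "r \<in> CR" for r
  proof -
    have "CR \<subseteq> {r. sipB n x r = 0}" unfolding CRs
      by (rule spanB_least[OF fG]) (auto simp: subsp_def sipB_add2 x_orth)
    then show ?thesis using that by blast
  qed
  define e0 where "e0 = (\<lambda>v. extB n 0 v 0)"
  have e0add: "\<And>a b. e0 (a + b) = e0 a + e0 b" by (simp add: e0_def extB_add)
  have e00: "e0 0 = 0" by (simp add: e0_def extB_0)
  have e0inj: "inj_on e0 A" if "A \<subseteq> Bvecs (2*n)" for A
    using that extB_inj unfolding e0_def inj_on_def by blast
  have e0at: "e0 r 0 = 0" for r by (simp add: e0_def)
  define r0 where "r0 = extB n 1 x 1"
  have r00: "r0 0 = 1" by (simp add: r0_def)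
  define T where "T = (\<lambda>(a::bit, r). (\<lambda>i. a * r0 i) + e0 r)"
  have Teq: "T (a, r) = extB n a (\<lambda>i. a * x i + r i) a" for a r
    by (simp add: T_def r0_def e0_def extB_comb)
  define R where "R = (\<lambda>i. if i = 0 then r0 else e0 (G (i - 1)))"
  have G'R: "G' = (\<lambda>i. embv Kap (R i))"
  proof
    fix i
    show "G' i = embv Kap (R i)"
      using ext_emb[of n 1 x 1] ext_emb[of n 0 "G (i - 1)" 0]
      by (simp add: G'_def R_def r0_def e0_def emb_def)
  qed
  have Rimg: "R ` {..<k+1} = insert r0 (e0 ` (G ` {..<k}))"
  proof -
    have 1: "{..<k+1} = insert 0 (Suc ` {..<k})" by (simp add: lessThan_Suc_eq_insert_0)
    have 2: "R ` Suc ` {..<k} = e0 ` G ` {..<k}" unfolding image_image R_def by simp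
    show ?thesis unfolding 1 image_insert 2 by (simp add: R_def)
  qed
  define DR where "DR = spanB (R ` {..<k+1})"
  have DReq: "DR = T ` (UNIV \<times> CR)"
    unfolding DR_def Rimg CRs T_def by (rule span_ins_lin[OF fG e0add e00])
  have Deq: "D = kcode DR"
  proof -
    have "G' ` {..<k+1} = embv Kap ` (R ` {..<k+1})" unfolding G'R by (simp add: image_image)
    then show ?thesis unfolding D_def DR_def by (simp add: gen_code_K)
  qed
  have sDR: "subsp DR" by (simp add: DR_def spanB_subsp)
  have bDR: "DR \<subseteq> Bvecs (2*(n+1))" unfolding DR_def
  proof (rule spanB_Bvecs)
    show "R ` {..<k+1} \<subseteq> Bvecs (2*(n+1))"
    proof -
      have "R i \<in> Bvecs (2*(n+1))" for i
        unfolding R_def r0_def e0_def by (cases "i = 0") (simp_all only: if_True if_False extB_Bvecs refl simp_thms)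
      then show ?thesis by blast
    qed
  qed simp
  have cDR: "card DR = 2 * card CR" unfolding DReq T_def
    by (rule card_lin_img) (simp_all add: fCR r00 e0at e0inj[OF bCR])
  have TDR: "T (a, r) \<in> DR" if "r \<in> CR" for a r
    unfolding DReq using that by blast
  have HD: "DR \<inter> sdualB (n+1) DR = T ` (UNIV \<times> HC)"
  proof
    show "DR \<inter> sdualB (n+1) DR \<subseteq> T ` (UNIV \<times> HC)"
    proof
      fix v assume v: "v \<in> DR \<inter> sdualB (n+1) DR"
      then obtain a r where ar: "v = T (a, r)" "r \<in> CR" unfolding DReq by auto
      have "sipB n r r' = 0" if r': "r' \<in> CR" for r'
      proof -
        have "sipB (n+1) v (T (0, r')) = 0" using v TDR[OF r'] by (auto simp: sdualB_def)
        moreover have "(\<lambda>i. (0::bit) * x i + r' i) = r'" by (simp add: fun_eq_iff)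
        ultimately have "sipB n (\<lambda>i. a * x i + r i) r' = 0"
          unfolding ar Teq sipB_extB by simp
        then show ?thesis unfolding sipB_lin1 xperp[OF r'] by simp
      qed
      then have "r \<in> HC" using ar bCR by (auto simp: HC_def sdualB_def)
      then show "v \<in> T ` (UNIV \<times> HC)" using ar by blast
    qed
  next
    show "T ` (UNIV \<times> HC) \<subseteq> DR \<inter> sdualB (n+1) DR"
    proof
      fix v assume "v \<in> T ` (UNIV \<times> HC)"
      then obtain a r where ar: "v = T (a, r)" "r \<in> HC" by auto
      have rC: "r \<in> CR" and rD: "r \<in> sdualB n CR" using ar(2) by (auto simp: HC_def)
      have vD: "v \<in> DR" using ar TDR rC by blast
      have "sipB (n+1) v w = 0" if w: "w \<in> DR" for w
      proof -
        obtain b t where bt: "w = T (b, t)" "t \<in> CR" using w unfolding DReq by auto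
        have rt: "sipB n r t = 0" using rD bt(2) by (auto simp: sdualB_def)
        have rx: "sipB n r x = 0" using xperp[OF rC] sipB_sym by metis
        have "sipB (n+1) v w = a * b + a * b + (a * (b * sipB n x x + sipB n x t) + (b * sipB n r x + sipB n r t))"
          unfolding ar bt Teq sipB_extB sipB_lin1 sipB_lin2 by simp
        also have "\<dots> = 0" unfolding rt rx sipB_self xperp[OF bt(2)] by simp
        finally show ?thesis .
      qed
      then have "v \<in> sdualB (n+1) DR" using vD bDR by (auto simp: sdualB_def)
      then show "v \<in> DR \<inter> sdualB (n+1) DR" using vD by blast
    qed
  qed
  have cHD: "card (DR \<inter> sdualB (n+1) DR) = 2 * card HC" unfolding HD T_def
    by (rule card_lin_img) (simp_all add: fHC r00 e0at e0inj[OF bHC])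
  have sHD: "subsp (DR \<inter> sdualB (n+1) DR)" by (intro subsp_Int sDR sdualB_subsp)
  have bHD: "DR \<inter> sdualB (n+1) DR \<subseteq> Bvecs (2*(n+1))" using bDR by blast
  have partA: "E_linear_code (2*(n+1)) D \<and> free_code (2*(n+1)) D \<and>
          rank_code (2*(n+1)) D = k + 1 \<and> hull_rank (n+1) D = l + 1"
  proof (intro conjI)
    show "E_linear_code (2*(n+1)) D" unfolding Deq by (rule kcode_lin[OF sDR bDR])
    show "free_code (2*(n+1)) D" unfolding Deq by (rule kcode_free[OF sDR bDR])
    have "2 ^ rank_code (2*(n+1)) D = (2::nat) ^ (k + 1)"
      using rank_kcode[OF sDR bDR] cDR cCR Deq by simp
    then show "rank_code (2*(n+1)) D = k + 1" by (rule pow2_inj)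
    have "SHull (n+1) D = kcode (DR \<inter> sdualB (n+1) DR)"
      unfolding Deq by (rule SHull_kcode[OF subsp_0[OF sDR]])
    then have "2 ^ hull_rank (n+1) D = (2::nat) ^ (l + 1)"
      using rank_kcode[OF sHD bHD] cHD cHC by (simp add: hull_rank_def)
    then show "hull_rank (n+1) D = l + 1" by (rule pow2_inj)
  qed
  have partB: "E_gen_matrix (2*n - k + 1)
            (\<lambda>j. if j = 0 then ext n Kap (embv Kap y) (emb Kap (1 + sipB n x y))
                 else ext n 0 (embv Kap (H (j - 1))) (emb Kap (sipB n x (H (j - 1)))))
            (sdualE (n+1) D)"
    if Hg: "B_gen_matrix (2*n) (2*n - k) H (sdualB n (C_Res C))" and yin: "y \<in> sdualB n (C_Res C)"
  proof -
    define m where "m = 2*n - k"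
    define HR where "HR = sdualB n CR"
    have HRs: "HR = spanB (H ` {..<m})" using Hg by (simp add: B_gen_matrix_def HR_def CR_def m_def)
    have yH: "y \<in> HR" using yin by (simp add: HR_def CR_def)
    have sHR: "subsp HR" unfolding HR_def by (rule sdualB_subsp)
    have fH: "finite (H ` {..<m})" by simp
    define \<delta> where "\<delta> = sipB n x y"
    define f where "f = (\<lambda>h. extB n 0 h (sipB n x h))"
    have fadd: "\<And>a b. f (a + b) = f a + f b" by (simp add: f_def extB_add sipB_add2)
    have f0: "f 0 = 0" by (simp add: f_def extB_0)
    define r0' where "r0' = extB n 1 y (1 + \<delta>)"
    define T' where "T' = (\<lambda>(a::bit, h). (\<lambda>i. a * r0' i) + f h)"
    have T'eq: "T' (a, h) = extB n a (\<lambda>i. a * y i + h i) (a * (1 + \<delta>) + sipB n x h)" for a h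
      by (simp add: T'_def r0'_def f_def extB_comb)
    define R' where "R' = (\<lambda>j. if j = 0 then r0' else f (H (j - 1)))"
    have H'R: "(\<lambda>j. if j = 0 then ext n Kap (embv Kap y) (emb Kap (1 + sipB n x y))
                 else ext n 0 (embv Kap (H (j - 1))) (emb Kap (sipB n x (H (j - 1))))) = (\<lambda>j. embv Kap (R' j))"
    proof
      fix j
      show "(if j = 0 then ext n Kap (embv Kap y) (emb Kap (1 + sipB n x y))
                 else ext n 0 (embv Kap (H (j - 1))) (emb Kap (sipB n x (H (j - 1))))) = embv Kap (R' j)"
        using ext_emb[of n 1 y "1 + sipB n x y"] ext_emb[of n 0 "H (j - 1)" "sipB n x (H (j - 1))"]
        by (simp add: R'_def r0'_def f_def \<delta>_def emb_def)
    qed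
    have R'img: "R' ` {..<m+1} = insert r0' (f ` (H ` {..<m}))"
    proof -
      have 1: "{..<m+1} = insert 0 (Suc ` {..<m})" by (simp add: lessThan_Suc_eq_insert_0)
      have 2: "R' ` Suc ` {..<m} = f ` H ` {..<m}" unfolding image_image R'_def by simp
      show ?thesis unfolding 1 image_insert 2 by (simp add: R'_def)
    qed
    have span': "spanB (R' ` {..<m+1}) = T' ` (UNIV \<times> HR)"
      unfolding R'img HRs T'_def by (rule span_ins_lin[OF fH fadd f0])
    have dual: "T' ` (UNIV \<times> HR) = sdualB (n+1) DR"
    proof
      show "T' ` (UNIV \<times> HR) \<subseteq> sdualB (n+1) DR"
      proof
        fix v assume "v \<in> T' ` (UNIV \<times> HR)"
        then obtain a h where ah: "v = T' (a, h)" "h \<in> HR" by auto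
        have "sipB (n+1) v w = 0" if w: "w \<in> DR" for w
        proof -
          obtain b t where bt: "w = T (b, t)" "t \<in> CR" using w unfolding DReq by auto
          have yt: "sipB n y t = 0" using yH bt(2) by (auto simp: HR_def sdualB_def)
          have ht: "sipB n h t = 0" using ah(2) bt(2) by (auto simp: HR_def sdualB_def)
          have yx: "sipB n y x = \<delta>" by (simp add: \<delta>_def sipB_sym)
          have hx: "sipB n h x = sipB n x h" by (simp add: sipB_sym)
          have "sipB (n+1) v w = a * b + (a * (1 + \<delta>) + sipB n x h) * b +
              (a * (b * sipB n y x + sipB n y t) + (b * sipB n h x + sipB n h t))"
            unfolding ah bt Teq T'eq sipB_extB sipB_lin1 sipB_lin2 by simp
          also have "\<dots> = 0" unfolding yt ht yx hx
            using bit_cases2[of a] bit_cases2[of b] bit_cases2[of \<delta>] bit_cases2[of "sipB n x h"]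
            by auto
          finally show ?thesis .
        qed
        moreover have "v \<in> Bvecs (2*(n+1))" unfolding ah T'eq by (rule extB_Bvecs)
        ultimately show "v \<in> sdualB (n+1) DR" by (auto simp: sdualB_def)
      qed
    next
      show "sdualB (n+1) DR \<subseteq> T' ` (UNIV \<times> HR)"
      proof
        fix v assume v: "v \<in> sdualB (n+1) DR"
        then have vB: "v \<in> Bvecs (2*(n+1))" by (simp add: sdualB_def)
        define \<alpha> where "\<alpha> = v 0"
        define \<beta> where "\<beta> = v (Suc n)"
        define w where "w = unext n v"
        have vw: "v = extB n \<alpha> w \<beta>" and wB: "w \<in> Bvecs (2*n)"
          using extB_surj[OF vB] by (simp_all add: \<alpha>_def \<beta>_def w_def)
        have orth: "sipB (n+1) v u = 0" if "u \<in> DR" for u using v that by (simp add: sdualB_def)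
        have wr: "sipB n w r = 0" if r: "r \<in> CR" for r
        proof -
          have "(\<lambda>i. (0::bit) * x i + r i) = r" by (simp add: fun_eq_iff)
          then have "sipB (n+1) v (extB n 0 r 0) = 0" using orth[OF TDR[OF r, of 0]] by (simp add: Teq)
          then show ?thesis unfolding vw sipB_extB by simp
        qed
        have wH: "w \<in> HR" using wB wr by (auto simp: HR_def sdualB_def)
        have "(\<lambda>i. (1::bit) * x i + 0 i) = x" by (simp add: fun_eq_iff)
        then have "sipB (n+1) v (extB n 1 x 1) = 0" using orth[OF TDR[OF subsp_0[OF sCR], of 1]] by (simp add: Teq)
        then have ab: "\<alpha> + \<beta> + sipB n w x = 0" unfolding vw sipB_extB by simp
        define h where "h = (\<lambda>i. \<alpha> * y i + w i)"
        have hH: "h \<in> HR" unfolding h_def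
          using subsp_add[OF sHR subsp_smult[OF sHR yH] wH] by (simp add: plus_fun_def)
        have e1: "(\<lambda>i. \<alpha> * y i + h i) = w" by (simp add: h_def fun_eq_iff add.assoc[symmetric])
        have e2: "\<alpha> * (1 + \<delta>) + sipB n x h = \<beta>"
        proof -
          have "sipB n x h = \<alpha> * \<delta> + sipB n x w" unfolding h_def sipB_lin2 \<delta>_def by simp
          moreover have "sipB n x w = sipB n w x" by (rule sipB_sym)
          ultimately show ?thesis using ab
            using bit_cases2[of \<alpha>] bit_cases2[of \<beta>] bit_cases2[of \<delta>] bit_cases2[of "sipB n w x"]
            by auto
        qed
        have "v = T' (\<alpha>, h)" unfolding T'eq e1 e2 vw ..
        then show "v \<in> T' ` (UNIV \<times> HR)" using hH by blast
      qed
    qed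
    have fR': "finite (R' ` {..<m+1})" by simp
    have "sdualE (n+1) D = gen_code (embv Kap ` (R' ` {..<m+1}))"
      unfolding Deq gen_code_K[OF fR'] span' dual by (rule sdualE_kcode[OF subsp_0[OF sDR]])
    then show ?thesis unfolding E_gen_matrix_def generates_def H'R m_def[symmetric]
      by (simp add: image_image)
  qed
  show ?thesis using partA partB by blast
qed

end
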